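(* Let $G$ be a connected graph, $(u,v)\in V_p$ and $w\in V(G)$. Then $r_w(u,v)=\frac12$ if and only if $w\in\{u,v\}$ and $V_i(u)\setminus\{v\}=V_i(v)\setminus\{u\}$ for every $1\le i\le\mathrm{diam}(G)$, where $V_i(x)=\{y\in V(G)\setminus\{x\}: d(x,y)=i\}$.
   Context: Graphs are finite, simple and connected; $d(u,v)$ denotes the shortest-path distance. $V_p$ denotes the set of all unordered pairs $(u,v)$ of distinct vertices. A vertex $x$ resolves the pair $(u,v)$ if $d(x,u)\neq d(x,v)$. For $(u,v)\in V_p$, $R(u,v)$ is the set of all vertices resolving $(u,v)$. The resolving share of a vertex $w$ for $(u,v)$ is $r_w(u,v)=\frac{1}{|R(u,v)|}$ if $w$ resolves $u$ and $v$, and $r_w(u,v)=0$ otherwise. *)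

theory Defs
  imports Main "HOL-Library.Extended_Nat" Complex_Main
begin

definition simple_graph :: "'a set \<Rightarrow> ('a \<Rightarrow> 'a \<Rightarrow> bool) \<Rightarrow> bool" where
  "simple_graph V E \<longleftrightarrow> finite V \<and> (\<forall>x y. E x y \<longrightarrow> x \<in> V \<and> y \<in> V)
     \<and> (\<forall>x y. E x y \<longrightarrow> E y x) \<and> (\<forall>x. \<not> E x x)"

definition walk :: "'a set \<Rightarrow> ('a \<Rightarrow> 'a \<Rightarrow> bool) \<Rightarrow> 'a list \<Rightarrow> bool" where
  "walk V E xs \<longleftrightarrow> xs \<noteq> [] \<and> set xs \<subseteq> V \<and> (\<forall>i. Suc i < length xs \<longrightarrow> E (xs ! i) (xs ! Suc i))"

definition connected_graph :: "'a set \<Rightarrow> ('a \<Rightarrow> 'a \<Rightarrow> bool) \<Rightarrow> bool" where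
  "connected_graph V E \<longleftrightarrow> V \<noteq> {} \<and>
     (\<forall>u\<in>V. \<forall>v\<in>V. \<exists>xs. walk V E xs \<and> hd xs = u \<and> last xs = v)"

text \<open>Shortest-path distance (meaningful for connected graphs).\<close>

definition gdist :: "'a set \<Rightarrow> ('a \<Rightarrow> 'a \<Rightarrow> bool) \<Rightarrow> 'a \<Rightarrow> 'a \<Rightarrow> nat" where
  "gdist V E u v = (LEAST n. \<exists>xs. walk V E xs \<and> hd xs = u \<and> last xs = v \<and> length xs = Suc n)"

definition diam :: "'a set \<Rightarrow> ('a \<Rightarrow> 'a \<Rightarrow> bool) \<Rightarrow> nat" where
  "diam V E = Max {gdist V E x y | x y. x \<in> V \<and> y \<in> V}"

definition resolves :: "'a set \<Rightarrow> ('a \<Rightarrow> 'a \<Rightarrow> bool) \<Rightarrow> 'a \<Rightarrow> 'a \<Rightarrow> 'a \<Rightarrow> bool" where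
  "resolves V E x u v \<longleftrightarrow> gdist V E x u \<noteq> gdist V E x v"

definition resolving_set :: "'a set \<Rightarrow> ('a \<Rightarrow> 'a \<Rightarrow> bool) \<Rightarrow> 'a \<Rightarrow> 'a \<Rightarrow> 'a set" where
  "resolving_set V E u v = {x \<in> V. resolves V E x u v}"

definition resolving_share :: "'a set \<Rightarrow> ('a \<Rightarrow> 'a \<Rightarrow> bool) \<Rightarrow> 'a \<Rightarrow> 'a \<Rightarrow> 'a \<Rightarrow> real" where
  "resolving_share V E w u v =
     (if resolves V E w u v then 1 / real (card (resolving_set V E u v)) else 0)"

definition dist_layer :: "'a set \<Rightarrow> ('a \<Rightarrow> 'a \<Rightarrow> bool) \<Rightarrow> nat \<Rightarrow> 'a \<Rightarrow> 'a set" where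
  "dist_layer V E i x = {y \<in> V - {x}. gdist V E x y = i}"

end

theory Submission
  imports Defs
begin

lemma walk_rev:
  assumes "simple_graph V E" "walk V E xs" shows "walk V E (rev xs)"
proof -
  have sy: "\<And>x y. E x y \<Longrightarrow> E y x" using assms(1) by (simp add: simple_graph_def)
  have w: "xs \<noteq> []" "set xs \<subseteq> V" "\<And>i. Suc i < length xs \<Longrightarrow> E (xs ! i) (xs ! Suc i)"
    using assms(2) by (auto simp: walk_def)
  have "E (rev xs ! i) (rev xs ! Suc i)" if i: "Suc i < length xs" for i
  proof -
    define j where "j = length xs - Suc (Suc i)"
    have "Suc j < length xs" "length xs - Suc i = Suc j" using i by (auto simp: j_def)
    then have "E (xs ! j) (xs ! Suc j)" using w(3) by blast
    moreover have "rev xs ! i = xs ! Suc j" "rev xs ! Suc i = xs ! j"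
      using i \<open>length xs - Suc i = Suc j\<close> by (auto simp: rev_nth j_def)
    ultimately show ?thesis using sy by simp
  qed
  then show ?thesis using w by (simp add: walk_def)
qed

lemma gdist_sym:
  assumes "simple_graph V E" shows "gdist V E u v = gdist V E v u"
proof -
  have "\<And>a b n. (\<exists>xs. walk V E xs \<and> hd xs = a \<and> last xs = b \<and> length xs = Suc n)
     \<Longrightarrow> (\<exists>xs. walk V E xs \<and> hd xs = b \<and> last xs = a \<and> length xs = Suc n)"
  proof -
    fix a b n assume "\<exists>xs. walk V E xs \<and> hd xs = a \<and> last xs = b \<and> length xs = Suc n"
    then obtain xs where h: "walk V E xs" "hd xs = a" "last xs = b" "length xs = Suc n" by blast
    have "xs \<noteq> []" using h(1) by (simp add: walk_def)
    then show "\<exists>xs. walk V E xs \<and> hd xs = b \<and> last xs = a \<and> length xs = Suc n"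
      using h walk_rev[OF assms h(1)] by (intro exI[of _ "rev xs"]) (auto simp: hd_rev last_rev)
  qed
  then have "\<And>n. (\<exists>xs. walk V E xs \<and> hd xs = u \<and> last xs = v \<and> length xs = Suc n)
     = (\<exists>xs. walk V E xs \<and> hd xs = v \<and> last xs = u \<and> length xs = Suc n)" by blast
  then show ?thesis unfolding gdist_def by simp
qed

lemma gdist_ex:
  assumes "connected_graph V E" "u \<in> V" "v \<in> V"
  shows "\<exists>xs. walk V E xs \<and> hd xs = u \<and> last xs = v \<and> length xs = Suc (gdist V E u v)"
proof -
  obtain xs where "walk V E xs" "hd xs = u" "last xs = v"
    using assms unfolding connected_graph_def by blast
  moreover have "xs \<noteq> []" using calculation by (simp add: walk_def)
  ultimately have "\<exists>n xs. walk V E xs \<and> hd xs = u \<and> last xs = v \<and> length xs = Suc n"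
    by (metis Suc_pred length_greater_0_conv)
  then show ?thesis unfolding gdist_def by (rule LeastI_ex)
qed

lemma gdist_self:
  assumes "u \<in> V" shows "gdist V E u u = 0"
proof -
  have "walk V E [u]" using assms by (simp add: walk_def)
  then show ?thesis unfolding gdist_def
    by (intro Least_eq_0) (rule exI[of _ "[u]"], simp)
qed

lemma gdist_pos:
  assumes "connected_graph V E" "u \<in> V" "v \<in> V" "u \<noteq> v"
  shows "gdist V E u v \<noteq> 0"
proof
  assume z: "gdist V E u v = 0"
  obtain xs where "walk V E xs" "hd xs = u" "last xs = v" "length xs = Suc 0"
    using gdist_ex[OF assms(1-3)] z by auto
  then show False using assms(4) by (cases xs) auto
qed

lemma gdist_le_diam:
  assumes "simple_graph V E" "x \<in> V" "y \<in> V" shows "gdist V E x y \<le> diam V E"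
proof -
  have fin: "finite V" using assms(1) by (simp add: simple_graph_def)
  have "{gdist V E x y | x y. x \<in> V \<and> y \<in> V} = (\<lambda>(x,y). gdist V E x y) ` (V \<times> V)" by auto
  then have "finite {gdist V E x y | x y. x \<in> V \<and> y \<in> V}" using fin by simp
  then show ?thesis unfolding diam_def using assms by (intro Max_ge) auto
qed

theorem lemma2p5:
  fixes V :: "'a set" and E :: "'a \<Rightarrow> 'a \<Rightarrow> bool" and u v w :: 'a
  assumes "simple_graph V E" and "connected_graph V E"
    and "u \<in> V" and "v \<in> V" and "u \<noteq> v" and "w \<in> V"
  shows "resolving_share V E w u v = 1/2 \<longleftrightarrow>
         (w \<in> {u, v} \<and>
          (\<forall>i. 1 \<le> i \<and> i \<le> diam V E \<longrightarrow>
               dist_layer V E i u - {v} = dist_layer V E i v - {u}))"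
proof -
  note sym = gdist_sym[OF assms(1)]
  have fin: "finite V" using assms(1) by (simp add: simple_graph_def)
  let ?R = "resolving_set V E u v"
  have finR: "finite ?R" using fin unfolding resolving_set_def by simp
  have uv: "gdist V E u v \<noteq> 0" using gdist_pos[OF assms(2-5)] .
  have ures: "u \<in> ?R" using assms uv gdist_self[OF assms(3)]
    unfolding resolving_set_def resolves_def by simp
  have vres: "v \<in> ?R"
  proof -
    have "gdist V E v u \<noteq> gdist V E v v" using uv gdist_self[OF assms(4)] sym[of v u] by simp
    then show ?thesis using assms(4) unfolding resolving_set_def resolves_def by simp
  qed
  have layers: "(\<forall>i. 1 \<le> i \<and> i \<le> diam V E \<longrightarrow>
               dist_layer V E i u - {v} = dist_layer V E i v - {u})
     \<longleftrightarrow> (\<forall>x\<in>V. x \<noteq> u \<and> x \<noteq> v \<longrightarrow> gdist V E u x = gdist V E v x)"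
  proof
    assume L: "\<forall>i. 1 \<le> i \<and> i \<le> diam V E \<longrightarrow>
               dist_layer V E i u - {v} = dist_layer V E i v - {u}"
    show "\<forall>x\<in>V. x \<noteq> u \<and> x \<noteq> v \<longrightarrow> gdist V E u x = gdist V E v x"
    proof (intro ballI impI)
      fix x assume x: "x \<in> V" "x \<noteq> u \<and> x \<noteq> v"
      let ?i = "gdist V E u x"
      have "?i \<noteq> 0" using gdist_pos[OF assms(2,3) x(1)] x by auto
      then have "1 \<le> ?i" by simp
      moreover have "?i \<le> diam V E" using gdist_le_diam[OF assms(1,3) x(1)] .
      ultimately have eq: "dist_layer V E ?i u - {v} = dist_layer V E ?i v - {u}" using L by blast
      have "x \<in> dist_layer V E ?i u - {v}" using x unfolding dist_layer_def by simp
      then have "x \<in> dist_layer V E ?i v" using eq by blast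
      then show "gdist V E u x = gdist V E v x" unfolding dist_layer_def by simp
    qed
  next
    assume D: "\<forall>x\<in>V. x \<noteq> u \<and> x \<noteq> v \<longrightarrow> gdist V E u x = gdist V E v x"
    show "\<forall>i. 1 \<le> i \<and> i \<le> diam V E \<longrightarrow>
               dist_layer V E i u - {v} = dist_layer V E i v - {u}"
      using D unfolding dist_layer_def by auto
  qed
  have R2: "card ?R = 2 \<longleftrightarrow> (\<forall>x\<in>V. x \<noteq> u \<and> x \<noteq> v \<longrightarrow> gdist V E u x = gdist V E v x)"
  proof
    assume c: "card ?R = 2"
    have "?R = {u, v}"
    proof (rule ccontr)
      assume "?R \<noteq> {u, v}"
      then have "{u,v} \<subset> ?R" using ures vres by auto
      then have "card {u,v} < card ?R" by (rule psubset_card_mono[OF finR])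
      then show False using c assms(5) by simp
    qed
    show "\<forall>x\<in>V. x \<noteq> u \<and> x \<noteq> v \<longrightarrow> gdist V E u x = gdist V E v x"
    proof (intro ballI impI)
      fix x assume x: "x \<in> V" "x \<noteq> u \<and> x \<noteq> v"
      then have "x \<notin> ?R" using \<open>?R = {u,v}\<close> by simp
      then have "gdist V E x u = gdist V E x v" using x(1) unfolding resolving_set_def resolves_def by simp
      then show "gdist V E u x = gdist V E v x" using sym[of x u] sym[of x v] by simp
    qed
  next
    assume D: "\<forall>x\<in>V. x \<noteq> u \<and> x \<noteq> v \<longrightarrow> gdist V E u x = gdist V E v x"
    have "?R \<subseteq> {u, v}"
    proof
      fix x assume "x \<in> ?R"
      then have x: "x \<in> V" "gdist V E x u \<noteq> gdist V E x v" unfolding resolving_set_def resolves_def by auto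
      show "x \<in> {u,v}"
      proof (rule ccontr)
        assume "x \<notin> {u,v}"
        then have "gdist V E u x = gdist V E v x" using D x(1) by auto
        then show False using x(2) sym[of x u] sym[of x v] by simp
      qed
    qed
    then have "?R = {u,v}" using ures vres by auto
    then show "card ?R = 2" using assms(5) by simp
  qed
  have "resolving_share V E w u v = 1/2 \<longleftrightarrow> (w \<in> ?R \<and> card ?R = 2)"
  proof -
    have e: "(1 / real n = 1/2) \<longleftrightarrow> n = 2" for n :: nat
    proof
      assume "1 / real n = 1/2"
      then have "real n = 2" by (metis divide_cancel_left one_neq_zero inverse_eq_divide inverse_inverse_eq)
      then show "n = 2" by simp
    qed simp
    have wR: "resolves V E w u v \<longleftrightarrow> w \<in> ?R" using assms(6) by (simp add: resolving_set_def)
    show ?thesis unfolding resolving_share_def wR using e by simp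
  qed
  also have "\<dots> \<longleftrightarrow> (w \<in> {u,v} \<and> card ?R = 2)"
  proof
    assume a: "w \<in> ?R \<and> card ?R = 2"
    have "?R = {u,v}"
    proof (rule ccontr)
      assume "?R \<noteq> {u, v}"
      then have "{u,v} \<subset> ?R" using ures vres by auto
      then have "card {u,v} < card ?R" by (rule psubset_card_mono[OF finR])
      then show False using a assms(5) by simp
    qed
    then show "w \<in> {u,v} \<and> card ?R = 2" using a by simp
  next
    assume "w \<in> {u,v} \<and> card ?R = 2"
    then show "w \<in> ?R \<and> card ?R = 2" using ures vres by blast
  qed
  also have "\<dots> \<longleftrightarrow> (w \<in> {u,v} \<and> (\<forall>i. 1 \<le> i \<and> i \<le> diam V E \<longrightarrow>
               dist_layer V E i u - {v} = dist_layer V E i v - {u}))"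
    unfolding layers R2 by (rule refl)
  finally show ?thesis .
qed

end
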